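(* Let $t=\frac13$ and $p=\frac1b$ for an integer $b\ge3$. Then bold play is optimal, i.e. $\pi(p,\frac13)=1-(1-p)^3$, attained by $c_1=c_2=c_3=\frac13$, $c_i=0$ for $i\ge4$.
   Context: Let $\beta_1,\beta_2,\ldots$ be independent Bernoulli random variables with success probability $p$. A stake sequence is a sequence $\gamma=(c_1,c_2,\ldots)$ of non-negative reals with $c_1\ge c_2\ge\cdots$ and $\sum_i c_i=1$; write $S_\gamma=\sum_i c_i\beta_i$. For $0\le p\le t\le 1$ define $\pi(p,t)=\sup\{\mathbf P(S_\gamma\ge t)\mid \gamma \text{ a stake sequence}\}$. Bold play for threshold $t$ is the stake sequence with $c_i=\frac1m$ for $i\le m$ and $c_i=0$ for $i>m$, where $m=\lfloor 1/t\rfloor$; it is optimal if it attains $\pi(p,t)$. *)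

theory Defs
  imports "HOL-Probability.Probability"
begin

text \<open>Indices are shifted by one: c 0 is the paper's c_1.\<close>

definition stake_seq :: "(nat \<Rightarrow> real) \<Rightarrow> bool" where
  "stake_seq c \<longleftrightarrow> (\<forall>i. 0 \<le> c i) \<and> (\<forall>i. c (Suc i) \<le> c i) \<and> c sums 1"

definition bern_space :: "real \<Rightarrow> bool stream measure" where
  "bern_space p = stream_space (measure_pmf (bernoulli_pmf p))"

definition S_gamma :: "(nat \<Rightarrow> real) \<Rightarrow> bool stream \<Rightarrow> real" where
  "S_gamma c \<omega> = (\<Sum>i. c i * (if \<omega> !! i then 1 else 0))"

definition win_prob :: "real \<Rightarrow> real \<Rightarrow> (nat \<Rightarrow> real) \<Rightarrow> real" where
  "win_prob p t c = measure (bern_space p) {\<omega> \<in> space (bern_space p). S_gamma c \<omega> \<ge> t}"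

definition pi_opt :: "real \<Rightarrow> real \<Rightarrow> real" where
  "pi_opt p t = (SUP c \<in> {c. stake_seq c}. win_prob p t c)"

definition bold_play :: "real \<Rightarrow> nat \<Rightarrow> real" where
  "bold_play t i = (let m = nat \<lfloor>1 / t\<rfloor> in if i < m then 1 / real m else 0)"

end

theory Submission
  imports Defs
begin

fun pf :: "real \<Rightarrow> real list \<Rightarrow> real \<Rightarrow> real" where
  "pf p [] t = (if t \<le> 0 then 1 else 0)"
| "pf p (c # cs) t = p * pf p cs (t - c) + (1 - p) * pf p cs t"

fun cols :: "nat \<Rightarrow> nat \<Rightarrow> nat list list" where
  "cols b 0 = [[]]"
| "cols b (Suc n) = concat (map (\<lambda>x. map (Cons x) (cols b n)) [0..<b])"

fun W :: "real list \<Rightarrow> nat list \<Rightarrow> nat \<Rightarrow> real" where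
  "W (c # cs) (x # xs) j = (if x = j then c else 0) + W cs xs j"
| "W _ _ j = 0"

definition ind :: "real \<Rightarrow> real \<Rightarrow> real" where
  "ind t v = (if t \<le> v then 1 else 0)"

lemma ind_shift: "ind t (a + v) = ind (t - a) v"
  by (simp add: ind_def)

lemma ind_le1: "ind t v \<le> 1" and ind_ge0: "0 \<le> ind t v"
  by (auto simp: ind_def)

lemma sum_list_concat_map:
  "sum_list (map f (concat xss)) = sum_list (map (\<lambda>xs. sum_list (map f xs)) xss)"
  by (induction xss) auto

lemma sum_cols_Suc:
  "sum_list (map f (cols b (Suc n))) = (\<Sum>y<b. sum_list (map (\<lambda>xs. f (y # xs)) (cols b n)))"
  by (simp add: sum_list_concat_map comp_def interv_sum_list_conv_sum_set_nat atLeast0LessThan)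

declare cols.simps(2)[simp del]

lemma sum_cols_const: "sum_list (map (\<lambda>_. K) (cols b n)) = real b ^ n * K"
  by (induction n) (simp_all add: sum_cols_Suc)

lemma sum_cols_mono:
  assumes "\<And>x. x \<in> set (cols b n) \<Longrightarrow> f x \<le> K"
  shows "sum_list (map f (cols b n)) \<le> real b ^ n * K"
proof -
  have "sum_list (map f (cols b n)) \<le> sum_list (map (\<lambda>_. K) (cols b n))"
    by (rule sum_list_mono) (use assms in auto)
  then show ?thesis by (simp add: sum_cols_const)
qed

lemma cols_set: "xs \<in> set (cols b n) \<Longrightarrow> length xs = n \<and> set xs \<subseteq> {..<b}"
  by (induction n arbitrary: xs) (fastforce simp: cols.simps)+

lemma sum_list_swap:
  "sum_list (map (\<lambda>x. sum (f x) A) xs) = (\<Sum>j\<in>A. sum_list (map (\<lambda>x. f x j) xs))"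
  by (induction xs) (auto simp: sum.distrib)

lemma count_pf:
  assumes "j < b"
  shows "sum_list (map (\<lambda>x. ind t (W cs x j)) (cols b (length cs))) = real b ^ length cs * pf (1 / real b) cs t"
  using assms
proof (induction cs arbitrary: t)
  case Nil
  then show ?case by (simp add: ind_def)
next
  case (Cons c cs)
  have b0: "real b > 0" using Cons.prems by simp
  have "sum_list (map (\<lambda>x. ind t (W (c # cs) x j)) (cols b (length (c # cs))))
      = (\<Sum>y<b. sum_list (map (\<lambda>xs. ind (t - (if y = j then c else 0)) (W cs xs j)) (cols b (length cs))))"
    by (simp add: sum_cols_Suc ind_shift)
  also have "\<dots> = (\<Sum>y<b. real b ^ length cs * pf (1 / real b) cs t
        + (if y = j then real b ^ length cs * (pf (1 / real b) cs (t - c) - pf (1 / real b) cs t) else 0))"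
    by (rule sum.cong) (auto simp: Cons.IH Cons.prems algebra_simps)
  also have "\<dots> = real b * (real b ^ length cs * pf (1 / real b) cs t)
        + real b ^ length cs * (pf (1 / real b) cs (t - c) - pf (1 / real b) cs t)"
    using Cons.prems by (simp add: sum.distrib)
  also have "\<dots> = real b ^ length (c # cs) * pf (1 / real b) (c # cs) t"
    using b0 by (simp add: field_simps)
  finally show ?case .
qed

lemma W_nonneg: "(\<forall>c\<in>set cs. 0 \<le> c) \<Longrightarrow> 0 \<le> W cs xs j"
  by (induction cs xs j rule: W.induct) auto

lemma W_sum: "length xs = length cs \<Longrightarrow> set xs \<subseteq> {..<b} \<Longrightarrow> (\<Sum>j<b. W cs xs j) = sum_list cs"
proof (induction cs xs "0::nat" arbitrary: b rule: W.induct)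
  case (1 c cs x xs)
  then have "x < b" by auto
  then have "(\<Sum>j<b. W (c # cs) (x # xs) j) = c + (\<Sum>j<b. W cs xs j)"
    by (simp add: sum.distrib)
  with 1 show ?case by auto
qed auto

lemma W_sum': "length xs = length cs \<Longrightarrow> set xs \<subseteq> {..<b} \<Longrightarrow> (\<Sum>j<b. W cs xs j) = sum_list cs"
proof (induction cs arbitrary: xs)
  case Nil
  then show ?case by simp
next
  case (Cons c cs)
  then obtain x xs' where xs: "xs = x # xs'" by (cases xs) auto
  with Cons.prems have "x < b" by auto
  then have "(\<Sum>j<b. W (c # cs) (x # xs') j) = c + (\<Sum>j<b. W cs xs' j)"
    by (simp add: sum.distrib)
  with Cons xs show ?case by auto
qed

lemma fiber:
  fixes w :: "nat \<Rightarrow> real" and b :: nat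
  assumes b3: "b \<ge> 3" and wnn: "\<forall>j<b. 0 \<le> w j" and wR: "(\<Sum>j<b. w j) \<le> R"
    and h1: "R + e < 3 * t" and h2: "R + f < 3 * t" and e0: "0 \<le> e"
  shows "(\<Sum>i<b. \<Sum>k<b. \<Sum>j<b. ind t ((if i = j then e else 0) + ((if k = j then f else 0) + w j)))
           \<le> 3 * real b ^ 2 - 3 * real b + 1"
proof -
  define T where "T i k j = ind t ((if i = j then e else 0) + ((if k = j then f else 0) + w j))" for i k j
  have "(\<Sum>i<b. \<Sum>k<b. \<Sum>j<b. T i k j) = (\<Sum>i<b. \<Sum>j<b. \<Sum>k<b. T i k j)"
    by (rule sum.cong[OF refl], rule sum.swap)
  also have "\<dots> = (\<Sum>j<b. \<Sum>i<b. \<Sum>k<b. T i k j)"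
    by (rule sum.swap)
  finally have swap: "(\<Sum>i<b. \<Sum>k<b. \<Sum>j<b. T i k j) = (\<Sum>j<b. \<Sum>i<b. \<Sum>k<b. T i k j)" .
  define g where "g j = (\<Sum>i<b. \<Sum>k<b. T i k j)" for j
  define H where "H = {j \<in> {..<b}. t \<le> w j}"
  have finH: "finite H" and Hsub: "H \<subseteq> {..<b}" by (auto simp: H_def)
  have sw0: "0 \<le> (\<Sum>j<b. w j)" using wnn by (intro sum_nonneg) auto
  have t0: "0 < t" using sw0 wR h1 e0 by linarith
  have "(\<Sum>j\<in>H. t) \<le> (\<Sum>j\<in>H. w j)" by (rule sum_mono) (auto simp: H_def)
  also have "\<dots> \<le> (\<Sum>j<b. w j)" by (rule sum_mono2) (use wnn Hsub in auto)
  finally have Hsum: "real (card H) * t \<le> (\<Sum>j<b. w j)" by simp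
  have cardH: "card H \<le> 2"
  proof (rule ccontr)
    assume "\<not> card H \<le> 2"
    then have "3 \<le> real (card H)" by simp
    then have "3 * t \<le> real (card H) * t" using t0 by (intro mult_right_mono) auto
    then show False using Hsum wR h1 e0 by linarith
  qed
  have gH: "g j \<le> real b ^ 2" for j
  proof -
    have "g j \<le> (\<Sum>i<b. \<Sum>k<b. (1::real))"
      unfolding g_def by (intro sum_mono) (auto simp: T_def ind_le1)
    then show ?thesis by (simp add: power2_eq_square)
  qed
  have gN: "g j \<le> 2 * real b - 1" if "j < b" "j \<notin> H" for j
  proof -
    have wj: "w j < t" using that by (auto simp: H_def)
    define a where "a i = (if i \<noteq> j then 1 else (0::real))" for i
    have "g j \<le> (\<Sum>i<b. \<Sum>k<b. (1 - a i * a k))"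
      unfolding g_def
    proof (intro sum_mono)
      fix i k
      show "T i k j \<le> 1 - a i * a k"
        using wj by (auto simp: T_def a_def ind_def)
    qed
    also have "\<dots> = real b * real b - (\<Sum>i<b. \<Sum>k<b. a i * a k)"
      by (simp add: sum_subtractf)
    also have "(\<Sum>i<b. \<Sum>k<b. a i * a k) = (\<Sum>i<b. a i) * (\<Sum>k<b. a k)"
      by (simp add: sum_product)
    also have "(\<Sum>i<b. a i) = real b - 1"
    proof -
      have "(\<Sum>i<b. a i) = (\<Sum>i<b. 1 - (if i = j then 1 else 0))"
        by (rule sum.cong) (auto simp: a_def)
      also have "\<dots> = real b - 1" using that by (simp add: sum_subtractf)
      finally show ?thesis .
    qed
    finally show ?thesis by (simp add: algebra_simps)
  qed
  have g2: "g j \<le> 1" if "card H = 2" "j < b" "j \<notin> H" for j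
  proof -
    have "w j + (\<Sum>j\<in>H. w j) = (\<Sum>j\<in>insert j H. w j)"
      using that finH by simp
    also have "\<dots> \<le> (\<Sum>j<b. w j)" by (rule sum_mono2) (use wnn Hsub that in auto)
    finally have "w j + real (card H) * t \<le> (\<Sum>j<b. w j)"
      using \<open>(\<Sum>j\<in>H. t) \<le> (\<Sum>j\<in>H. w j)\<close> by simp
    then have wj: "w j + 2 * t \<le> R" using that wR by simp
    have "g j \<le> (\<Sum>i<b. \<Sum>k<b. (if i = j \<and> k = j then 1 else 0))"
      unfolding g_def
    proof (intro sum_mono)
      fix i k
      show "T i k j \<le> (if i = j \<and> k = j then 1 else 0)"
        using wj h1 h2 e0 by (auto simp: T_def ind_def)
    qed
    also have "\<dots> = (\<Sum>i<b. (if i = j then 1 else 0))"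
    proof (rule sum.cong[OF refl])
      fix i
      show "(\<Sum>k<b. if i = j \<and> k = j then 1 else 0) = (if i = j then 1 else (0::real))"
        using that by (cases "i = j") auto
    qed
    also have "\<dots> = 1" using that by simp
    finally show ?thesis .
  qed
  have split: "(\<Sum>j<b. g j) = (\<Sum>j\<in>H. g j) + (\<Sum>j\<in>{..<b} - H. g j)"
    using Hsub by (simp add: sum.subset_diff)
  have cd: "card ({..<b} - H) = b - card H" using Hsub finH by (simp add: card_Diff_subset)
  have cHb: "card H \<le> b" using Hsub card_mono[of "{..<b}" H] by simp
  have p1: "(\<Sum>j\<in>H. g j) \<le> real (card H) * real b ^ 2"
    using sum_mono[of H g "\<lambda>_. real b ^ 2"] gH by simp
  have tot: "(\<Sum>j<b. g j) \<le> 3 * real b ^ 2 - 3 * real b + 1"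
  proof (cases "card H = 2")
    case True
    have "(\<Sum>j\<in>{..<b} - H. g j) \<le> (\<Sum>j\<in>{..<b} - H. 1)"
      by (rule sum_mono) (use g2 True in auto)
    then have p2: "(\<Sum>j\<in>{..<b} - H. g j) \<le> real b - 2" using cd True cHb by simp
    have "real b ^ 2 - 4 * real b + 3 \<ge> 0"
    proof -
      have "(real b - 1) * (real b - 3) \<ge> 0" using b3 by (intro mult_nonneg_nonneg) auto
      then show ?thesis by (simp add: algebra_simps power2_eq_square)
    qed
    then show ?thesis using split p1 p2 True by simp
  next
    case False
    have "(\<Sum>j\<in>{..<b} - H. g j) \<le> (\<Sum>j\<in>{..<b} - H. 2 * real b - 1)"
      by (rule sum_mono) (use gN in auto)
    then have p2: "(\<Sum>j\<in>{..<b} - H. g j) \<le> real (b - card H) * (2 * real b - 1)" using cd by simp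
    have "card H = 0 \<or> card H = 1" using False cardH by auto
    then show ?thesis
    proof
      assume c0: "card H = 0"
      have "(real b - 1)^2 \<ge> 0" by simp
      then show ?thesis using split p1 p2 c0 by (simp add: algebra_simps power2_eq_square)
    next
      assume c1: "card H = 1"
      have "real (b - 1) = real b - 1" using b3 by simp
      then show ?thesis using split p1 p2 c1 by (simp add: algebra_simps power2_eq_square)
    qed
  qed
  show ?thesis using swap tot by (simp add: g_def T_def)
qed

lemma fin_bound:
  fixes b :: nat
  assumes b3: "b \<ge> 3" and nn: "\<forall>c\<in>set (e # f # rest). 0 \<le> c"
    and h1: "sum_list rest + e < 3 * t" and h2: "sum_list rest + f < 3 * t"
  shows "pf (1 / real b) (e # f # rest) t \<le> 1 - (1 - 1 / real b) ^ 3"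
proof -
  define n where "n = length rest"
  define cs where "cs = e # f # rest"
  define N where "N x = (\<Sum>j<b. ind t (W cs x j))" for x
  have b0: "real b > 0" using b3 by simp
  have lcs: "length cs = Suc (Suc n)" by (simp add: cs_def n_def)
  have "sum_list (map N (cols b (length cs))) = (\<Sum>j<b. sum_list (map (\<lambda>x. ind t (W cs x j)) (cols b (length cs))))"
    unfolding N_def by (rule sum_list_swap)
  also have "\<dots> = (\<Sum>j<b. real b ^ length cs * pf (1 / real b) cs t)"
    by (rule sum.cong[OF refl]) (simp add: count_pf)
  also have "\<dots> = real b * real b ^ length cs * pf (1 / real b) cs t" by simp
  finally have eq1: "sum_list (map N (cols b (length cs))) = real b * real b ^ length cs * pf (1 / real b) cs t" .
  have "sum_list (map N (cols b (length cs))) = (\<Sum>i<b. \<Sum>k<b. sum_list (map (\<lambda>y. N (i # k # y)) (cols b n)))"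
    by (simp add: lcs sum_cols_Suc)
  also have "\<dots> = sum_list (map (\<lambda>y. \<Sum>i<b. \<Sum>k<b. N (i # k # y)) (cols b n))"
    by (simp add: sum_list_swap)
  also have "\<dots> \<le> real b ^ n * (3 * real b ^ 2 - 3 * real b + 1)"
  proof (rule sum_cols_mono)
    fix y assume y: "y \<in> set (cols b n)"
    have "(\<Sum>i<b. \<Sum>k<b. N (i # k # y)) = (\<Sum>i<b. \<Sum>k<b. \<Sum>j<b. ind t ((if i = j then e else 0) + ((if k = j then f else 0) + W rest y j)))"
      by (simp add: N_def cs_def)
    also have "\<dots> \<le> 3 * real b ^ 2 - 3 * real b + 1"
    proof (rule fiber[where R = "sum_list rest"])
      show "\<forall>j<b. 0 \<le> W rest y j" using nn by (auto intro: W_nonneg)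
      show "(\<Sum>j<b. W rest y j) \<le> sum_list rest"
        using cols_set[OF y] by (simp add: W_sum n_def)
    qed (use b3 h1 h2 nn in auto)
    finally show "(\<Sum>i<b. \<Sum>k<b. N (i # k # y)) \<le> 3 * real b ^ 2 - 3 * real b + 1" .
  qed
  finally have "real b * real b ^ Suc (Suc n) * pf (1 / real b) cs t \<le> real b ^ n * (3 * real b ^ 2 - 3 * real b + 1)"
    using eq1 lcs by simp
  then have "real b ^ n * (real b ^ 3 * pf (1 / real b) cs t) \<le> real b ^ n * (3 * real b ^ 2 - 3 * real b + 1)"
    by (simp add: algebra_simps power3_eq_cube)
  then have "real b ^ 3 * pf (1 / real b) cs t \<le> 3 * real b ^ 2 - 3 * real b + 1"
    using b0 by (simp add: mult_le_cancel_left_pos)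
  then have "pf (1 / real b) cs t \<le> (3 * real b ^ 2 - 3 * real b + 1) / real b ^ 3"
    using b0 by (simp add: field_simps)
  also have "\<dots> = 1 - (1 - 1 / real b) ^ 3"
    using b0 by (simp add: field_simps power3_eq_cube power2_eq_square)
  finally show ?thesis by (simp add: cs_def)
qed

definition psum :: "(nat \<Rightarrow> real) \<Rightarrow> nat \<Rightarrow> bool stream \<Rightarrow> real" where
  "psum c n \<omega> = (\<Sum>i<n. c i * (if \<omega> !! i then 1 else 0))"

lemma psum_Suc: "psum c (Suc n) (x ## \<omega>) = c 0 * (if x then 1 else 0) + psum (\<lambda>i. c (Suc i)) n \<omega>"
  by (simp only: psum_def sum.lessThan_Suc_shift) simp

lemma psum_meas[measurable]:
  "{\<omega> \<in> space (bern_space p). t \<le> psum c n \<omega>} \<in> sets (bern_space p)"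
  unfolding psum_def bern_space_def by measurable

lemma prob_bern: "prob_space (bern_space p)"
  unfolding bern_space_def by (rule prob_space.prob_space_stream_space[OF measure_pmf.prob_space_axioms])

lemma meas_rec:
  assumes p: "0 \<le> p" "p \<le> 1"
  shows "measure (bern_space p) {\<omega> \<in> space (bern_space p). t \<le> psum c (Suc n) \<omega>}
     = p * measure (bern_space p) {\<omega> \<in> space (bern_space p). t - c 0 \<le> psum (\<lambda>i. c (Suc i)) n \<omega>}
       + (1 - p) * measure (bern_space p) {\<omega> \<in> space (bern_space p). t \<le> psum (\<lambda>i. c (Suc i)) n \<omega>}"
proof -
  let ?M = "measure_pmf (bernoulli_pmf p)"
  let ?X = "measure (bern_space p) {\<omega> \<in> space (bern_space p). t - c 0 \<le> psum (\<lambda>i. c (Suc i)) n \<omega>}"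
  let ?Y = "measure (bern_space p) {\<omega> \<in> space (bern_space p). t \<le> psum (\<lambda>i. c (Suc i)) n \<omega>}"
  have XX: "measure (bern_space p) {\<omega> \<in> space (bern_space p). t \<le> c 0 + psum (\<lambda>i. c (Suc i)) n \<omega>} = ?X"
    by (rule arg_cong[where f = "measure (bern_space p)"], rule Collect_cong) linarith
  have "ennreal (measure (bern_space p) {\<omega> \<in> space (bern_space p). t \<le> psum c (Suc n) \<omega>})
      = (\<integral>\<^sup>+x. ennreal (measure (bern_space p) {\<omega> \<in> space (bern_space p). t \<le> psum c (Suc n) (x ## \<omega>)}) \<partial>?M)"
    unfolding bern_space_def
    by (rule prob_space.prob_stream_space[OF measure_pmf.prob_space_axioms]) (use psum_meas[of p t c "Suc n"] in \<open>simp add: bern_space_def\<close>)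
  also have "\<dots> = ennreal (measure (bern_space p) {\<omega> \<in> space (bern_space p). t \<le> psum c (Suc n) (True ## \<omega>)}) * ennreal p
      + ennreal (measure (bern_space p) {\<omega> \<in> space (bern_space p). t \<le> psum c (Suc n) (False ## \<omega>)}) * ennreal (1 - p)"
    by (rule nn_integral_bernoulli_pmf) (use p in simp_all)
  also have "\<dots> = ennreal (measure (bern_space p) {\<omega> \<in> space (bern_space p). t \<le> c 0 + psum (\<lambda>i. c (Suc i)) n \<omega>}) * ennreal p + ennreal ?Y * ennreal (1 - p)"
    unfolding psum_Suc if_True if_False mult_1_right mult_zero_right add_0 by (rule refl)
  also have "\<dots> = ennreal (p * ?X + (1 - p) * ?Y)"
  proof -
    have "ennreal (p * ?X + (1 - p) * ?Y) = ennreal (p * ?X) + ennreal ((1 - p) * ?Y)"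
      by (rule ennreal_plus) (use p in \<open>simp_all add: measure_nonneg\<close>)
    also have "\<dots> = ennreal ?X * ennreal p + ennreal ?Y * ennreal (1 - p)"
      using p by (simp only: ennreal_mult measure_nonneg mult.commute)
    finally show ?thesis unfolding XX by (rule sym)
  qed
  finally show ?thesis
    using p by (subst (asm) ennreal_inj) (auto simp: measure_nonneg)
qed

lemma meas_pf:
  assumes p: "0 \<le> p" "p \<le> 1"
  shows "measure (bern_space p) {\<omega> \<in> space (bern_space p). t \<le> psum c n \<omega>} = pf p (map c [0..<n]) t"
proof (induction n arbitrary: c t)
  case 0
  interpret prob_space "bern_space p" by (rule prob_bern)
  show ?case by (simp add: psum_def prob_space)
next
  case (Suc n)
  show ?case
    by (simp add: meas_rec[OF p] Suc.IH map_upt_Suc del: upt_Suc)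
qed

lemma bold3: "bold_play (1/3) = (\<lambda>i. if i < 3 then 1/3 else 0)"
  by (rule ext) (simp add: bold_play_def)

lemma S_finite:
  assumes "\<And>i. i \<ge> n \<Longrightarrow> c i = 0"
  shows "S_gamma c \<omega> = psum c n \<omega>"
  unfolding S_gamma_def psum_def
  by (rule suminf_finite) (use assms in auto)

lemma p_le: "0 \<le> (p::real) \<Longrightarrow> p \<le> 1 \<Longrightarrow> p \<le> 1 - (1 - p) ^ 3"
proof -
  assume a: "0 \<le> p" "p \<le> 1"
  have "(1 - p) ^ 3 \<le> (1 - p) ^ 1" by (rule power_decreasing) (use a in auto)
  then show ?thesis by simp
qed

lemma win_le:
  fixes b :: nat
  assumes b3: "b \<ge> 3" and pdef: "p = 1 / real b" and st: "stake_seq c"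
  shows "win_prob p (1/3) c \<le> 1 - (1 - p) ^ 3"
proof -
  have p01: "0 \<le> p" "p \<le> 1" using b3 pdef by auto
  interpret P: prob_space "bern_space p" by (rule prob_bern)
  have nn: "\<And>i. 0 \<le> c i" and dec: "\<And>i. c (Suc i) \<le> c i" and sm: "c sums 1"
    using st by (auto simp: stake_seq_def)
  have anti: "c j \<le> c i" if "i \<le> j" for i j
    using lift_Suc_antimono_le[of c, OF dec that] .
  have summ: "summable c" using sm by (rule sums_summable)
  have suminf1: "suminf c = 1" using sm by (rule sums_unique[symmetric])
  have psle: "(\<Sum>i<n. c i) \<le> 1" for n
    using sum_le_suminf[OF summ, of "{..<n}"] nn suminf1 by auto
  show ?thesis
  proof (cases "c 1 = 0")
    case True
    have z: "c i = 0" if "i \<ge> 1" for i using anti[OF that] True nn[of i] by simp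
    have "suminf c = (\<Sum>n\<in>{0}. c n)" by (rule suminf_finite) (use z in auto)
    then have c0: "c 0 = 1" using suminf1 by simp
    have "win_prob p (1/3) c = measure (bern_space p) {\<omega> \<in> space (bern_space p). 1/3 \<le> psum c 1 \<omega>}"
      unfolding win_prob_def using S_finite[of 1 c] z by simp
    also have "\<dots> = p" using meas_pf[OF p01, of "1/3" c 1] c0 by simp
    also have "\<dots> \<le> 1 - (1 - p) ^ 3" using p_le[OF p01] .
    finally show ?thesis .
  next
    case False
    then have c1: "c 1 > 0" using nn[of 1] by simp
    define t where "t = (2 - c 1) / 6"
    define A where "A n = {\<omega> \<in> space (bern_space p). t \<le> psum c (n + 2) \<omega>}" for n
    have Asets: "range A \<subseteq> sets (bern_space p)" by (auto simp: A_def)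
    have Ainc: "incseq A"
    proof (rule incseq_SucI)
      fix n
      have "psum c (n + 2) \<omega> \<le> psum c (Suc n + 2) \<omega>" for \<omega>
        unfolding psum_def using nn by (intro sum_mono2) auto
      then show "A n \<subseteq> A (Suc n)" unfolding A_def by (auto intro: order_trans)
    qed
    have Abound: "measure (bern_space p) (A n) \<le> 1 - (1 - p) ^ 3" for n
    proof -
      define rest where "rest = map c [2..<n + 2]"
      have lst: "map c [0..<n + 2] = c 0 # c 1 # rest"
        by (simp add: rest_def upt_conv_Cons numeral_2_eq_2 del: upt_Suc)
      have e1: "sum_list (map c [0..<n + 2]) = (\<Sum>i<n + 2. c i)"
        by (simp only: interv_sum_list_conv_sum_set_nat set_upt atLeast0LessThan)
      have e2: "sum_list (map c [0..<n + 2]) = c 0 + c 1 + sum_list rest"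
        by (simp only: lst) simp
      have sr: "c 0 + c 1 + sum_list rest \<le> 1" using psle[of "n + 2"] e1 e2 by linarith
      have "measure (bern_space p) (A n) = pf p (c 0 # c 1 # rest) t"
        unfolding A_def using meas_pf[OF p01, of t c "n + 2"] lst by simp
      also have "\<dots> \<le> 1 - (1 - p) ^ 3"
        unfolding pdef
      proof (rule fin_bound[OF b3])
        show "\<forall>x\<in>set (c 0 # c 1 # rest). 0 \<le> x" using nn by (auto simp: rest_def)
        show "sum_list rest + c 0 < 3 * t" using sr c1 by (simp add: t_def)
        show "sum_list rest + c 1 < 3 * t" using sr c1 anti[of 0 1] by (simp add: t_def)
      qed
      finally show ?thesis .
    qed
    have lim: "(\<lambda>n. measure (bern_space p) (A n)) \<longlonglongrightarrow> measure (bern_space p) (\<Union>n. A n)"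
      by (rule Lim_measure_incseq[OF Asets Ainc]) (simp add: P.emeasure_finite)
    have Ubound: "measure (bern_space p) (\<Union>n. A n) \<le> 1 - (1 - p) ^ 3"
      by (rule LIMSEQ_le_const2[OF lim]) (use Abound in auto)
    have sub: "{\<omega> \<in> space (bern_space p). 1/3 \<le> S_gamma c \<omega>} \<subseteq> (\<Union>n. A n)"
    proof
      fix \<omega> assume w: "\<omega> \<in> {\<omega> \<in> space (bern_space p). 1/3 \<le> S_gamma c \<omega>}"
      let ?f = "\<lambda>i. c i * (if \<omega> !! i then 1 else 0)"
      have fs: "summable ?f"
        by (rule summable_comparison_test'[OF summ, of 0]) (use nn in auto)
      have "(\<lambda>n. \<Sum>i<n. ?f i) \<longlonglongrightarrow> S_gamma c \<omega>"
        unfolding S_gamma_def by (rule summable_LIMSEQ[OF fs])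
      moreover have "t < S_gamma c \<omega>" using w c1 by (simp add: t_def)
      ultimately have "eventually (\<lambda>n. t < (\<Sum>i<n. ?f i)) sequentially"
        by (rule order_tendstoD(1))
      then obtain N where N: "t < (\<Sum>i<N. ?f i)" by (auto simp: eventually_sequentially)
      have "(\<Sum>i<N. ?f i) \<le> psum c (N + 2) \<omega>"
        unfolding psum_def using nn by (intro sum_mono2) auto
      then have "\<omega> \<in> A N" using N w by (simp add: A_def)
      then show "\<omega> \<in> (\<Union>n. A n)" by blast
    qed
    have "win_prob p (1/3) c \<le> measure (bern_space p) (\<Union>n. A n)"
      unfolding win_prob_def
      by (rule P.finite_measure_mono[OF sub]) (use Asets in auto)
    then show ?thesis using Ubound by simp
  qed
qed

lemma bold_stake: "stake_seq (bold_play (1/3))"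
proof -
  have "(\<lambda>i::nat. if i < 3 then 1/3 else 0::real) sums (\<Sum>i\<in>{..<3::nat}. if i < 3 then 1/3 else 0::real)"
    by (rule sums_finite) auto
  then show ?thesis unfolding bold3 stake_seq_def by (simp add: eval_nat_numeral)
qed

lemma bold_win:
  fixes b :: nat
  assumes b3: "b \<ge> 3" and pdef: "p = 1 / real b"
  shows "win_prob p (1/3) (bold_play (1/3)) = 1 - (1 - p) ^ 3"
proof -
  have p01: "0 \<le> p" "p \<le> 1" using b3 pdef by auto
  have "win_prob p (1/3) (bold_play (1/3)) = measure (bern_space p) {\<omega> \<in> space (bern_space p). 1/3 \<le> psum (bold_play (1/3)) 3 \<omega>}"
    unfolding win_prob_def using S_finite[of 3 "bold_play (1/3)"] by (simp add: bold3)
  also have "\<dots> = pf p (map (bold_play (1/3)) [0..<3]) (1/3)"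
    by (rule meas_pf[OF p01])
  also have "\<dots> = 1 - (1 - p) ^ 3"
    by (simp add: bold3 upt_conv_Cons power3_eq_cube algebra_simps del: upt_Suc)
  finally show ?thesis .
qed

theorem proposition20:
  fixes b :: nat and p :: real
  assumes "b \<ge> 3" and "p = 1 / real b"
  shows "pi_opt p (1/3) = 1 - (1 - p) ^ 3
       \<and> win_prob p (1/3) (bold_play (1/3)) = pi_opt p (1/3)
       \<and> bold_play (1/3) = (\<lambda>i. if i < 3 then 1/3 else 0)"
proof -
  have pi: "pi_opt p (1/3) = 1 - (1 - p) ^ 3"
    unfolding pi_opt_def
  proof (rule cSup_eq_maximum)
    show "1 - (1 - p) ^ 3 \<in> (\<lambda>c. win_prob p (1/3) c) ` {c. stake_seq c}"
      using bold_win[OF assms] bold_stake by (auto intro: image_eqI[where x = "bold_play (1/3)"])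
    show "x \<le> 1 - (1 - p) ^ 3" if "x \<in> (\<lambda>c. win_prob p (1/3) c) ` {c. stake_seq c}" for x
      using that win_le[OF assms] by auto
  qed
  show ?thesis using pi bold_win[OF assms] bold3 by simp
qed

end
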